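(* Let $X$ and $Y$ be Banach spaces, $T:X\to Y$ a bounded linear operator, and $Z$ a closed subspace of $X$. If $T[Z]$ is closed and complemented in $Y$ and $Z\cap\ker(T)$ is complemented in $X$, then $Z$ is complemented in $X$. *)

theory Defs
  imports "HOL-Analysis.Analysis"
begin

definition complemented :: "'a::real_normed_vector set \<Rightarrow> bool" where
  "complemented S \<longleftrightarrow> subspace S \<and> closed S \<and>
     (\<exists>W. subspace W \<and> closed W \<and> S \<inter> W = {0} \<and>
          (\<forall>x. \<exists>s\<in>S. \<exists>w\<in>W. x = s + w))"

end

theory Submission
  imports Defs
begin

theorem lemma2p2:
  fixes T :: "'a::banach \<Rightarrow> 'b::banach" and Z :: "'a set"
  assumes "bounded_linear T"
    and "subspace Z" and "closed Z"
    and "complemented (T ` Z)"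
    and "complemented (Z \<inter> {x. T x = 0})"
  shows "complemented Z"
proof -
  interpret T: bounded_linear T by fact
  have lin: "linear T" using assms(1) bounded_linear.linear by blast
  obtain U where U: "subspace U" "closed U" "T ` Z \<inter> U = {0}"
      "\<forall>y. \<exists>v\<in>T ` Z. \<exists>u\<in>U. y = v + u"
    using assms(4) unfolding complemented_def by blast
  obtain W where W: "subspace W" "closed W" "(Z \<inter> {x. T x = 0}) \<inter> W = {0}"
      "\<forall>x. \<exists>k\<in>Z \<inter> {x. T x = 0}. \<exists>w\<in>W. x = k + w"
    using assms(5) unfolding complemented_def by blast
  define C where "C = W \<inter> T -` U"
  have "subspace (T -` U)"
    unfolding subspace_def
  proof (intro conjI ballI allI)
    show "0 \<in> T -` U" using U(1) by (simp add: T.zero subspace_0)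
    fix x y assume "x \<in> T -` U" "y \<in> T -` U"
    then show "x + y \<in> T -` U" using U(1) by (simp add: T.add subspace_add)
  next
    fix c x assume "x \<in> T -` U"
    then show "c *\<^sub>R x \<in> T -` U" using U(1) by (simp add: T.scaleR subspace_scale)
  qed
  then have "subspace C" unfolding C_def
    using W(1) subspace_inter by blast
  moreover have "closed C"
  proof -
    have "continuous_on UNIV T" by (rule linear_continuous_on[OF assms(1)])
    then have "closed (T -` U)" by (rule closed_vimage[OF U(2)])
    then show ?thesis unfolding C_def using W(2) by (intro closed_Int)
  qed
  moreover have "Z \<inter> C = {0}"
  proof
    show "Z \<inter> C \<subseteq> {0}"
    proof
      fix z assume z: "z \<in> Z \<inter> C"
      then have "T z \<in> T ` Z \<inter> U" unfolding C_def by auto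
      then have "T z = 0" using U(3) by auto
      then show "z \<in> {0}" using z W(3) unfolding C_def by auto
    qed
    show "{0} \<subseteq> Z \<inter> C" using assms(2) U(1) W(1) unfolding C_def
      by (auto simp: subspace_0)
  qed
  moreover have "\<forall>x. \<exists>s\<in>Z. \<exists>w\<in>C. x = s + w"
  proof
    fix x
    obtain v u where vu: "v \<in> T ` Z" "u \<in> U" "T x = v + u" using U(4) by blast
    then obtain z0 where z0: "z0 \<in> Z" "v = T z0" by blast
    obtain k w where kw: "k \<in> Z" "T k = 0" "w \<in> W" "x - z0 = k + w" using W(4) by blast
    have "T w = T (x - z0) - T k" using kw(4) by (simp add: T.diff T.add)
    also have "\<dots> = u" using kw(2) vu(3) z0(2) by (simp add: T.diff)
    finally have "w \<in> C" using kw(3) vu(2) unfolding C_def by auto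
    moreover have "z0 + k \<in> Z" using assms(2) z0(1) kw(1) by (simp add: subspace_add)
    moreover have "x = (z0 + k) + w" using kw(4) by (simp add: algebra_simps)
    ultimately show "\<exists>s\<in>Z. \<exists>w\<in>C. x = s + w" by blast
  qed
  ultimately show ?thesis unfolding complemented_def using assms(2,3) by blast
qed

end
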